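(* Let $S$ be a finite relational signature and let $P$ be a ProbLog model over $S$ without domain constants such that every background knowledge clause $h:-b_1,\ldots,b_l$ of $P$ has the property that every variable occurring in the body $b_1,\ldots,b_l$ also occurs in the head $h$. Then the family $\{Q^{(n)}\mid n\in\mathbb{N}\}$ of distributions defined by $P$ is a projective random relational structure model.
   Context: A relational signature $S$ is a set of relation symbols with arities, written $r/k$. For $n\in\mathbb{N}$ let $[n]=\{0,\ldots,n-1\}$ and let $\Omega^{(n)}$ be the set of possible worlds for $S$ over domain $[n]$, i.e. truth assignments to all ground atoms $r(\mathbf{i})$, $r/k\in S$, $\mathbf{i}\in[n]^k$. A random relational structure model (RRSM) is a family $\{Q^{(n)}\mid n\in\mathbb{N}\}$ with $Q^{(n)}$ a probability distribution on $\Omega^{(n)}$. $Q^{(n)}$ is exchangeable if $Q^{(n)}(\omega)=Q^{(n)}(\omega')$ whenever $\omega,\omega'$ are isomorphic. For $m\le n$, $Q^{(n)}\downarrow[m]$ is the marginal distribution of $Q^{(n)}$ on the ground atoms with all arguments in $[m]$ (a distribution on $\Omega^{(m)}$). An RRSM is projective if every $Q^{(n)}$ is exchangeable and $Q^{(n)}\downarrow[m]=Q^{(m)}$ for all $m<n$. A ProbLog model (without constants) consists of a finite set of labeled facts $p::r(T_1,\ldots,T_k)$ with $p\in[0,1]$, $r/k\in S$ and variables $T_j$, together with background knowledge: a finite set of definite clauses $h:-b_1,\ldots,b_l$ whose head $h$ and body atoms $b_j$ are atoms over $S$ with variable arguments. For domain $[n]$, each ground instance (substitution of elements of $[n]$ for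 the variables) of each labeled fact $p::a$ is independently selected as true with probability $p$; given the selected set $F$ of ground facts, the resulting world $\omega_F\in\Omega^{(n)}$ is the least model over $[n]$ of $F$ together with all ground instances over $[n]$ of the background clauses. $Q^{(n)}(\omega)$ is the probability that $\omega_F=\omega$. *)

theory Defs
  imports Complex_Main
begin

type_synonym ('r,'v) atom = "'r \<times> 'v list"
type_synonym 'r gatom = "'r \<times> nat list"

definition ground_atoms :: "'r set \<Rightarrow> ('r \<Rightarrow> nat) \<Rightarrow> nat \<Rightarrow> 'r gatom set" where
  "ground_atoms S ar n = {(r, is). r \<in> S \<and> length is = ar r \<and> set is \<subseteq> {..<n}}"

text \<open>Possible worlds over [n]: a truth assignment is identified with the set of true ground atoms.\<close>
definition worlds :: "'r set \<Rightarrow> ('r \<Rightarrow> nat) \<Rightarrow> nat \<Rightarrow> 'r gatom set set" where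
  "worlds S ar n = Pow (ground_atoms S ar n)"

definition inst :: "('v \<Rightarrow> nat) \<Rightarrow> ('r,'v) atom \<Rightarrow> 'r gatom" where
  "inst \<sigma> a = (fst a, map \<sigma> (snd a))"

definition vars_atom :: "('r,'v) atom \<Rightarrow> 'v set" where
  "vars_atom a = set (snd a)"

definition wf_atom :: "'r set \<Rightarrow> ('r \<Rightarrow> nat) \<Rightarrow> ('r,'v) atom \<Rightarrow> bool" where
  "wf_atom S ar a \<longleftrightarrow> fst a \<in> S \<and> length (snd a) = ar (fst a)"

text \<open>A ProbLog model: a finite list of labeled facts (p, a) meaning p::a, and a finite list of
  definite clauses (h, [b1,...,bl]) meaning h :- b1,...,bl.\<close>
definition problog_wf ::
  "'r set \<Rightarrow> ('r \<Rightarrow> nat) \<Rightarrow> (real \<times> ('r,'v) atom) list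
    \<Rightarrow> (('r,'v) atom \<times> ('r,'v) atom list) list \<Rightarrow> bool" where
  "problog_wf S ar facts bk \<longleftrightarrow>
     (\<forall>(p, a) \<in> set facts. 0 \<le> p \<and> p \<le> 1 \<and> wf_atom S ar a) \<and>
     (\<forall>(h, bs) \<in> set bk. wf_atom S ar h \<and> (\<forall>b \<in> set bs. wf_atom S ar b))"

definition body_vars_in_head :: "(('r,'v) atom \<times> ('r,'v) atom list) list \<Rightarrow> bool" where
  "body_vars_in_head bk \<longleftrightarrow> (\<forall>(h, bs) \<in> set bk. (\<Union>b \<in> set bs. vars_atom b) \<subseteq> vars_atom h)"

inductive_set least_model ::
  "(('r,'v) atom \<times> ('r,'v) atom list) list \<Rightarrow> nat \<Rightarrow> 'r gatom set \<Rightarrow> 'r gatom set"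
  for bk :: "(('r,'v) atom \<times> ('r,'v) atom list) list" and n :: nat and F :: "'r gatom set" where
  fact: "g \<in> F \<Longrightarrow> g \<in> least_model bk n F"
| rule: "(h, bs) \<in> set bk \<Longrightarrow>
         (\<forall>v \<in> vars_atom h \<union> (\<Union>b \<in> set bs. vars_atom b). \<sigma> v < n) \<Longrightarrow>
         (\<forall>b \<in> set bs. inst \<sigma> b \<in> least_model bk n F) \<Longrightarrow>
         inst \<sigma> h \<in> least_model bk n F"

text \<open>The independent random choices: pairs (k, g) with g a ground instance over [n] of the
  k-th labeled fact.\<close>
definition choices :: "(real \<times> ('r,'v) atom) list \<Rightarrow> nat \<Rightarrow> (nat \<times> 'r gatom) set" where
  "choices facts n = {(k, g). k < length facts \<and>
     (\<exists>\<sigma>. (\<forall>v \<in> vars_atom (snd (facts ! k)). \<sigma> v < n) \<and> g = inst \<sigma> (snd (facts ! k)))}"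

definition sel_prob :: "(real \<times> ('r,'v) atom) list \<Rightarrow> nat \<Rightarrow> (nat \<times> 'r gatom) set \<Rightarrow> real" where
  "sel_prob facts n F =
     (\<Prod>(k, g) \<in> choices facts n. if (k, g) \<in> F then fst (facts ! k) else 1 - fst (facts ! k))"

definition problog_dist ::
  "(real \<times> ('r,'v) atom) list \<Rightarrow> (('r,'v) atom \<times> ('r,'v) atom list) list
    \<Rightarrow> nat \<Rightarrow> 'r gatom set \<Rightarrow> real" where
  "problog_dist facts bk n \<omega> =
     (\<Sum>F \<in> Pow (choices facts n).
        if least_model bk n (snd ` F) = \<omega> then sel_prob facts n F else 0)"

definition rename_world :: "(nat \<Rightarrow> nat) \<Rightarrow> 'r gatom set \<Rightarrow> 'r gatom set" where
  "rename_world \<pi> \<omega> = (\<lambda>(r, is). (r, map \<pi> is)) ` \<omega>"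

definition isomorphic_worlds :: "nat \<Rightarrow> 'r gatom set \<Rightarrow> 'r gatom set \<Rightarrow> bool" where
  "isomorphic_worlds n \<omega> \<omega>' \<longleftrightarrow>
     (\<exists>\<pi>. bij_betw \<pi> {..<n} {..<n} \<and> \<omega>' = rename_world \<pi> \<omega>)"

definition is_distribution :: "'r set \<Rightarrow> ('r \<Rightarrow> nat) \<Rightarrow> nat \<Rightarrow> ('r gatom set \<Rightarrow> real) \<Rightarrow> bool" where
  "is_distribution S ar n Q \<longleftrightarrow>
     (\<forall>\<omega> \<in> worlds S ar n. 0 \<le> Q \<omega>) \<and> (\<Sum>\<omega> \<in> worlds S ar n. Q \<omega>) = 1"

definition exchangeable :: "'r set \<Rightarrow> ('r \<Rightarrow> nat) \<Rightarrow> nat \<Rightarrow> ('r gatom set \<Rightarrow> real) \<Rightarrow> bool" where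
  "exchangeable S ar n Q \<longleftrightarrow>
     (\<forall>\<omega> \<in> worlds S ar n. \<forall>\<omega>' \<in> worlds S ar n. isomorphic_worlds n \<omega> \<omega>' \<longrightarrow> Q \<omega> = Q \<omega>')"

definition marginal ::
  "'r set \<Rightarrow> ('r \<Rightarrow> nat) \<Rightarrow> nat \<Rightarrow> nat \<Rightarrow> ('r gatom set \<Rightarrow> real) \<Rightarrow> 'r gatom set \<Rightarrow> real" where
  "marginal S ar n m Q \<omega>' =
     (\<Sum>\<omega> \<in> {\<omega> \<in> worlds S ar n. \<omega> \<inter> ground_atoms S ar m = \<omega>'}. Q \<omega>)"

definition projective_rrsm :: "'r set \<Rightarrow> ('r \<Rightarrow> nat) \<Rightarrow> (nat \<Rightarrow> 'r gatom set \<Rightarrow> real) \<Rightarrow> bool" where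
  "projective_rrsm S ar Q \<longleftrightarrow>
     (\<forall>n. is_distribution S ar n (Q n) \<and> exchangeable S ar n (Q n)) \<and>
     (\<forall>m n. m < n \<longrightarrow> (\<forall>\<omega> \<in> worlds S ar m. marginal S ar n m (Q n) \<omega> = Q m \<omega>))"

end

theory Submission imports Defs begin

definition wt :: "('c \<Rightarrow> real) \<Rightarrow> 'c set \<Rightarrow> 'c set \<Rightarrow> real" where
  "wt q C F = (\<Prod>c\<in>C. if c \<in> F then q c else 1 - q c)"

lemma split_aux:
  assumes "finite D" "finite C'" "D \<inter> C' = {}"
  shows "(\<Sum>F\<in>Pow (C' \<union> D). h (F \<inter> C') * wt q (C' \<union> D) F) = (\<Sum>F\<in>Pow C'. h F * wt q C' F)"
  using assms
proof (induction D rule: finite_induct)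
  case empty
  then show ?case by (auto intro!: sum.cong simp: Int_absorb2)
next
  case (insert d D)
  let ?A = "C' \<union> D"
  have dA: "d \<notin> ?A" using insert by auto
  have fA: "finite ?A" using insert by auto
  have eq: "C' \<union> insert d D = insert d ?A" by auto
  have "(\<Sum>F\<in>Pow (insert d ?A). h (F \<inter> C') * wt q (insert d ?A) F)
     = (\<Sum>F\<in>Pow ?A. h (F \<inter> C') * wt q (insert d ?A) F) + (\<Sum>F\<in>insert d ` Pow ?A. h (F \<inter> C') * wt q (insert d ?A) F)"
    unfolding Pow_insert by (rule sum.union_disjoint) (use dA fA in auto)
  also have "(\<Sum>F\<in>Pow ?A. h (F \<inter> C') * wt q (insert d ?A) F) = (\<Sum>F\<in>Pow ?A. (1 - q d) * (h (F \<inter> C') * wt q ?A F))"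
  proof (rule sum.cong)
    fix F assume F: "F \<in> Pow ?A"
    then have "d \<notin> F" using dA by auto
    then show "h (F \<inter> C') * wt q (insert d ?A) F = (1 - q d) * (h (F \<inter> C') * wt q ?A F)"
      unfolding wt_def using dA fA by (simp add: prod.insert)
  qed simp
  also have "(\<Sum>F\<in>insert d ` Pow ?A. h (F \<inter> C') * wt q (insert d ?A) F) = (\<Sum>F\<in>Pow ?A. h (insert d F \<inter> C') * wt q (insert d ?A) (insert d F))"
  proof -
    have "inj_on (insert d) (Pow ?A)" using dA by (auto intro!: inj_onI simp: insert_ident)
    then show ?thesis by (simp add: sum.reindex o_def)
  qed
  also have "\<dots> = (\<Sum>F\<in>Pow ?A. q d * (h (F \<inter> C') * wt q ?A F))"
  proof (rule sum.cong)
    fix F assume F: "F \<in> Pow ?A"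
    have "insert d F \<inter> C' = F \<inter> C'" using insert by auto
    moreover have "wt q (insert d ?A) (insert d F) = q d * wt q ?A F"
      unfolding wt_def using dA fA by (auto simp: prod.insert intro!: prod.cong)
    ultimately show "h (insert d F \<inter> C') * wt q (insert d ?A) (insert d F) = q d * (h (F \<inter> C') * wt q ?A F)" by simp
  qed simp
  finally have "(\<Sum>F\<in>Pow (insert d ?A). h (F \<inter> C') * wt q (insert d ?A) F) = (\<Sum>F\<in>Pow ?A. h (F \<inter> C') * wt q ?A F)"
    by (simp only: sum_distrib_left[symmetric]) (simp add: algebra_simps)
  then show ?case using insert eq by simp
qed

lemma split_sum:
  assumes "finite C" "C' \<subseteq> C"
  shows "(\<Sum>F\<in>Pow C. h (F \<inter> C') * wt q C F) = (\<Sum>F\<in>Pow C'. h F * wt q C' F)"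
proof -
  have "C = C' \<union> (C - C')" using assms by auto
  then show ?thesis using split_aux[of "C - C'" C' h q] assms finite_subset by force
qed

lemma sum_wt: "finite C \<Longrightarrow> (\<Sum>F\<in>Pow C. wt q C F) = 1"
  using split_sum[of C "{}" "\<lambda>_. 1" q] by (simp add: wt_def)

definition argsin :: "nat \<Rightarrow> 'r gatom set" where
  "argsin m = {g. set (snd g) \<subseteq> {..<m}}"

lemma inst_argsin: "(\<forall>v\<in>vars_atom a. \<sigma> v < m) \<longleftrightarrow> inst \<sigma> a \<in> argsin m"
  by (auto simp: inst_def argsin_def vars_atom_def)

lemma lm_argsin:
  assumes "g \<in> least_model bk n G" "G \<subseteq> argsin n"
  shows "g \<in> argsin n"
  using assms
proof (induction rule: least_model.induct)
  case (rule h bs \<sigma>)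
  then show ?case using inst_argsin[of h \<sigma> n] by auto
qed auto

lemma lm_wf:
  assumes "g \<in> least_model bk n G" "G \<subseteq> ground_atoms S ar n" "problog_wf S ar facts bk"
  shows "g \<in> ground_atoms S ar n"
  using assms
proof (induction rule: least_model.induct)
  case (rule h bs \<sigma>)
  then have "wf_atom S ar h" unfolding problog_wf_def by auto
  moreover have "inst \<sigma> h \<in> argsin n" using rule(2) inst_argsin[of h \<sigma> n] by auto
  ultimately show ?case by (auto simp: ground_atoms_def wf_atom_def inst_def argsin_def)
qed auto

lemma lm_mono:
  assumes "g \<in> least_model bk m G" "m \<le> n" "G \<subseteq> G'"
  shows "g \<in> least_model bk n G'"
  using assms(1)
proof (induction rule: least_model.induct)
  case (fact g)
  then show ?case using assms by (auto intro: least_model.fact)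
next
  case (rule h bs \<sigma>)
  have "\<forall>v \<in> vars_atom h \<union> (\<Union>b \<in> set bs. vars_atom b). \<sigma> v < n"
  proof
    fix v assume "v \<in> vars_atom h \<union> (\<Union>b \<in> set bs. vars_atom b)"
    then have "\<sigma> v < m" using rule(2) by blast
    then show "\<sigma> v < n" using assms(2) by simp
  qed
  moreover have "\<forall>b\<in>set bs. inst \<sigma> b \<in> least_model bk n G'" using rule(3) by simp
  ultimately show ?case
    by (rule least_model.rule[OF rule(1)])
qed

lemma lm_restrict:
  assumes "g \<in> least_model bk n G" and bvh: "body_vars_in_head bk"
  shows "g \<in> argsin m \<longrightarrow> g \<in> least_model bk m (G \<inter> argsin m)"
  using assms(1)
proof (induction rule: least_model.induct)
  case (fact g)
  then show ?case by (auto intro: least_model.fact)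
next
  case (rule h bs \<sigma>)
  show ?case
  proof
    assume hm: "inst \<sigma> h \<in> argsin m"
    have hv: "\<forall>v\<in>vars_atom h. \<sigma> v < m" using hm inst_argsin[of h \<sigma> m] by simp
    have bv: "(\<Union>b \<in> set bs. vars_atom b) \<subseteq> vars_atom h"
      using bspec[OF bvh[unfolded body_vars_in_head_def] rule(1)] by simp
    have allv: "\<forall>v \<in> vars_atom h \<union> (\<Union>b \<in> set bs. vars_atom b). \<sigma> v < m"
      using hv bv by blast
    have "\<forall>b\<in>set bs. inst \<sigma> b \<in> least_model bk m (G \<inter> argsin m)"
    proof
      fix b assume b: "b \<in> set bs"
      have "\<forall>v\<in>vars_atom b. \<sigma> v < m" using allv b by blast
      then have "inst \<sigma> b \<in> argsin m" using inst_argsin[of b \<sigma> m] by simp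
      then show "inst \<sigma> b \<in> least_model bk m (G \<inter> argsin m)" using rule(3) b by blast
    qed
    then show "inst \<sigma> h \<in> least_model bk m (G \<inter> argsin m)"
      by (rule least_model.rule[OF rule(1) allv])
  qed
qed

definition ren :: "(nat \<Rightarrow> nat) \<Rightarrow> 'r gatom \<Rightarrow> 'r gatom" where
  "ren \<pi> = (\<lambda>(r, is). (r, map \<pi> is))"

lemma ren_inst: "ren \<pi> (inst \<sigma> a) = inst (\<pi> \<circ> \<sigma>) a"
  by (simp add: ren_def inst_def)

lemma lm_rename:
  assumes "g \<in> least_model bk n G" "\<forall>x<n. \<pi> x < n"
  shows "ren \<pi> g \<in> least_model bk n (ren \<pi> ` G)"
  using assms(1)
proof (induction rule: least_model.induct)
  case (fact g)
  then show ?case by (auto intro: least_model.fact)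
next
  case (rule h bs \<sigma>)
  have "inst (\<pi> \<circ> \<sigma>) h \<in> least_model bk n (ren \<pi> ` G)"
  proof (rule least_model.rule[OF rule(1)])
    show "\<forall>v\<in>vars_atom h \<union> (\<Union>b\<in>set bs. vars_atom b). (\<pi> \<circ> \<sigma>) v < n"
      using rule(2) assms(2) by simp
    show "\<forall>b\<in>set bs. inst (\<pi> \<circ> \<sigma>) b \<in> least_model bk n (ren \<pi> ` G)"
      using rule(3) by (simp add: ren_inst)
  qed
  then show ?case by (simp add: ren_inst)
qed

lemma ren_argsin: "g \<in> argsin n \<Longrightarrow> \<forall>x<n. \<pi> x < n \<Longrightarrow> ren \<pi> g \<in> argsin n"
  by (cases g) (auto simp: ren_def argsin_def)

lemma ren_ren: "g \<in> argsin n \<Longrightarrow> \<forall>x<n. \<pi>' (\<pi> x) = x \<Longrightarrow> ren \<pi>' (ren \<pi> g) = g"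
  by (cases g) (auto simp: ren_def argsin_def intro!: map_idI)

lemma GA_argsin: "ground_atoms S ar n \<subseteq> argsin n"
  by (auto simp: ground_atoms_def argsin_def)

lemma finite_GA: assumes "finite S" shows "finite (ground_atoms S ar n)"
proof -
  have "ground_atoms S ar n = (\<Union>r\<in>S. Pair r ` {is. set is \<subseteq> {..<n} \<and> length is = ar r})"
    by (auto simp: ground_atoms_def)
  then show ?thesis using assms by (simp add: finite_lists_length_eq)
qed

lemma choices_sub:
  assumes "problog_wf S ar facts bk"
  shows "choices facts n \<subseteq> {..<length facts} \<times> ground_atoms S ar n"
proof
  fix c assume "c \<in> choices facts n"
  then obtain k \<sigma> where c: "c = (k, inst \<sigma> (snd (facts ! k)))" "k < length facts"
     "\<forall>v \<in> vars_atom (snd (facts ! k)). \<sigma> v < n"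
    unfolding choices_def by auto
  have "facts ! k \<in> set facts" using c by simp
  then have "wf_atom S ar (snd (facts ! k))" using assms unfolding problog_wf_def by auto
  moreover have "inst \<sigma> (snd (facts ! k)) \<in> argsin n" using c(3) inst_argsin by blast
  ultimately show "c \<in> {..<length facts} \<times> ground_atoms S ar n"
    using c by (auto simp: ground_atoms_def wf_atom_def inst_def argsin_def)
qed

lemma finite_choices:
  assumes "finite S" "problog_wf S ar facts bk"
  shows "finite (choices facts n)"
  using choices_sub[OF assms(2), of n] finite_GA[OF assms(1)] finite_subset by blast

lemma choices_argsin: "c \<in> choices facts n \<Longrightarrow> snd c \<in> argsin n"
proof -
  assume "c \<in> choices facts n"
  then obtain k \<sigma> where "c = (k, inst \<sigma> (snd (facts ! k)))" "\<forall>v\<in>vars_atom (snd (facts ! k)). \<sigma> v < n"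
    unfolding choices_def by auto
  then show ?thesis using inst_argsin[of "snd (facts ! k)" \<sigma> n] by simp
qed

lemma choices_restrict:
  assumes "F \<subseteq> choices facts n"
  shows "snd ` (F \<inter> choices facts m) = snd ` F \<inter> argsin m"
proof
  show "snd ` (F \<inter> choices facts m) \<subseteq> snd ` F \<inter> argsin m"
  proof
    fix g assume "g \<in> snd ` (F \<inter> choices facts m)"
    then obtain c where c: "c \<in> F" "c \<in> choices facts m" "g = snd c" by auto
    then have "g \<in> argsin m" using choices_argsin by simp
    then show "g \<in> snd ` F \<inter> argsin m" using c by simp
  qed
  show "snd ` F \<inter> argsin m \<subseteq> snd ` (F \<inter> choices facts m)"
  proof
    fix g assume "g \<in> snd ` F \<inter> argsin m"
    then obtain k where kg: "(k, g) \<in> F" "g \<in> argsin m" by force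
    then have "(k, g) \<in> choices facts n" using assms by auto
    then obtain \<sigma> where "k < length facts" "g = inst \<sigma> (snd (facts ! k))"
      unfolding choices_def by auto
    moreover then have "\<forall>v \<in> vars_atom (snd (facts ! k)). \<sigma> v < m"
      using kg(2) inst_argsin[of "snd (facts ! k)" \<sigma> m] by simp
    ultimately have "(k, g) \<in> choices facts m" unfolding choices_def by auto
    then show "g \<in> snd ` (F \<inter> choices facts m)" using kg by force
  qed
qed

lemma choices_mono: "m \<le> n \<Longrightarrow> choices facts m \<subseteq> choices facts n"
  unfolding choices_def by (auto intro: less_le_trans)

lemma sel_prob_wt: "sel_prob facts n F = wt (\<lambda>c. fst (facts ! fst c)) (choices facts n) F"
  unfolding sel_prob_def wt_def by (rule prod.cong) auto

lemma wt_nonneg: "(\<And>c. c \<in> C \<Longrightarrow> 0 \<le> q c \<and> q c \<le> 1) \<Longrightarrow> 0 \<le> wt q C F"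
  unfolding wt_def by (rule prod_nonneg) auto

lemma q_bounds:
  assumes "problog_wf S ar facts bk" "c \<in> choices facts n"
  shows "0 \<le> fst (facts ! fst c) \<and> fst (facts ! fst c) \<le> 1"
proof -
  have "fst c < length facts" using assms(2) unfolding choices_def by auto
  then have "facts ! fst c \<in> set facts" by simp
  then obtain p a where "(p, a) \<in> set facts" "facts ! fst c = (p, a)" by (metis prod.collapse)
  then show ?thesis using assms(1) unfolding problog_wf_def by auto
qed

lemma sel_prob_nonneg:
  assumes "problog_wf S ar facts bk"
  shows "0 \<le> sel_prob facts n F"
  unfolding sel_prob_wt using q_bounds[OF assms] by (intro wt_nonneg) blast

lemma lm_in_worlds:
  assumes "problog_wf S ar facts bk" "F \<subseteq> choices facts n"
  shows "least_model bk n (snd ` F) \<in> worlds S ar n"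
proof -
  have "snd ` F \<subseteq> ground_atoms S ar n" using choices_sub[OF assms(1), of n] assms(2) by auto
  then have "least_model bk n (snd ` F) \<subseteq> ground_atoms S ar n"
    using lm_wf[OF _ _ assms(1)] by (intro subsetI)
  then show ?thesis unfolding worlds_def by simp
qed

lemma lm_proj:
  assumes wf: "problog_wf S ar facts bk" and bvh: "body_vars_in_head bk"
    and mn: "m \<le> n" and F: "F \<subseteq> choices facts n"
  shows "least_model bk n (snd ` F) \<inter> ground_atoms S ar m = least_model bk m (snd ` (F \<inter> choices facts m))"
proof
  show "least_model bk n (snd ` F) \<inter> ground_atoms S ar m \<subseteq> least_model bk m (snd ` (F \<inter> choices facts m))"
  proof
    fix g assume g: "g \<in> least_model bk n (snd ` F) \<inter> ground_atoms S ar m"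
    then have "g \<in> argsin m" using GA_argsin by blast
    then have "g \<in> least_model bk m (snd ` F \<inter> argsin m)"
      using lm_restrict[OF _ bvh] g by blast
    then show "g \<in> least_model bk m (snd ` (F \<inter> choices facts m))"
      using choices_restrict[OF F] by simp
  qed
  show "least_model bk m (snd ` (F \<inter> choices facts m)) \<subseteq> least_model bk n (snd ` F) \<inter> ground_atoms S ar m"
  proof
    fix g assume g: "g \<in> least_model bk m (snd ` (F \<inter> choices facts m))"
    have "g \<in> least_model bk n (snd ` F)" by (rule lm_mono[OF g mn]) auto
    moreover have "snd ` (F \<inter> choices facts m) \<subseteq> ground_atoms S ar m"
      using choices_sub[OF wf, of m] by auto
    then have "g \<in> ground_atoms S ar m" using lm_wf[OF g _ wf] by blast
    ultimately show "g \<in> least_model bk n (snd ` F) \<inter> ground_atoms S ar m" by blast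
  qed
qed

lemma finite_worlds: "finite S \<Longrightarrow> finite (worlds S ar n)"
  unfolding worlds_def using finite_GA by blast

lemma dist_ok:
  assumes fS: "finite S" and wf: "problog_wf S ar facts bk"
  shows "is_distribution S ar n (problog_dist facts bk n)"
proof -
  let ?C = "choices facts n"
  have fC: "finite ?C" using finite_choices[OF fS wf] .
  have "(\<Sum>\<omega>\<in>worlds S ar n. problog_dist facts bk n \<omega>)
      = (\<Sum>F\<in>Pow ?C. \<Sum>\<omega>\<in>worlds S ar n. if least_model bk n (snd ` F) = \<omega> then sel_prob facts n F else 0)"
    unfolding problog_dist_def by (rule sum.swap)
  also have "\<dots> = (\<Sum>F\<in>Pow ?C. sel_prob facts n F)"
    using lm_in_worlds[OF wf] finite_worlds[OF fS] by (intro sum.cong) auto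
  also have "\<dots> = 1" unfolding sel_prob_wt using sum_wt[OF fC] .
  finally show ?thesis unfolding is_distribution_def problog_dist_def
    using sel_prob_nonneg[OF wf] by (auto intro!: sum_nonneg)
qed

lemma marg_ok:
  assumes fS: "finite S" and wf: "problog_wf S ar facts bk" and bvh: "body_vars_in_head bk"
    and mn: "m < n"
  shows "marginal S ar n m (problog_dist facts bk n) \<omega>' = problog_dist facts bk m \<omega>'"
proof -
  let ?C = "choices facts n" and ?Cm = "choices facts m"
  let ?q = "\<lambda>c. fst (facts ! fst c)"
  let ?W = "{\<omega> \<in> worlds S ar n. \<omega> \<inter> ground_atoms S ar m = \<omega>'}"
  have fC: "finite ?C" using finite_choices[OF fS wf] .
  have fW: "finite ?W" using finite_worlds[OF fS] by simp
  have sub: "?Cm \<subseteq> ?C" using choices_mono[of m n facts] mn by simp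
  have "marginal S ar n m (problog_dist facts bk n) \<omega>'
      = (\<Sum>F\<in>Pow ?C. \<Sum>\<omega>\<in>?W. if least_model bk n (snd ` F) = \<omega> then sel_prob facts n F else 0)"
    unfolding marginal_def problog_dist_def by (rule sum.swap)
  also have "\<dots> = (\<Sum>F\<in>Pow ?C. (if least_model bk m (snd ` (F \<inter> ?Cm)) = \<omega>' then 1 else 0) * wt ?q ?C F)"
  proof (rule sum.cong)
    fix F assume F: "F \<in> Pow ?C"
    have "(\<Sum>\<omega>\<in>?W. if least_model bk n (snd ` F) = \<omega> then sel_prob facts n F else 0)
        = (if least_model bk n (snd ` F) \<in> ?W then sel_prob facts n F else 0)"
      using fW by (simp add: sum.delta)
    also have "\<dots> = (if least_model bk m (snd ` (F \<inter> ?Cm)) = \<omega>' then 1 else 0) * wt ?q ?C F"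
      using lm_in_worlds[OF wf, of F n] F lm_proj[OF wf bvh _ , of m n F] mn
      by (simp add: sel_prob_wt)
    finally show "(\<Sum>\<omega>\<in>?W. if least_model bk n (snd ` F) = \<omega> then sel_prob facts n F else 0)
        = (if least_model bk m (snd ` (F \<inter> ?Cm)) = \<omega>' then 1 else 0) * wt ?q ?C F" .
  qed simp
  also have "\<dots> = (\<Sum>F\<in>Pow ?Cm. (if least_model bk m (snd ` F) = \<omega>' then 1 else 0) * wt ?q ?Cm F)"
    by (rule split_sum[OF fC sub])
  also have "\<dots> = problog_dist facts bk m \<omega>'"
    unfolding problog_dist_def sel_prob_wt by (intro sum.cong) auto
  finally show ?thesis .
qed

definition RC :: "(nat \<Rightarrow> nat) \<Rightarrow> nat \<times> 'r gatom \<Rightarrow> nat \<times> 'r gatom" where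
  "RC \<pi> c = (fst c, ren \<pi> (snd c))"

lemma RC_choices:
  assumes "\<forall>x<n. \<pi> x < n" "c \<in> choices facts n"
  shows "RC \<pi> c \<in> choices facts n"
proof -
  obtain k \<sigma> where c: "c = (k, inst \<sigma> (snd (facts ! k)))" "k < length facts"
     "\<forall>v \<in> vars_atom (snd (facts ! k)). \<sigma> v < n"
    using assms(2) unfolding choices_def by auto
  have "\<forall>v \<in> vars_atom (snd (facts ! k)). (\<pi> \<circ> \<sigma>) v < n" using c(3) assms(1) by simp
  then have "\<exists>\<sigma>'. (\<forall>v\<in>vars_atom (snd (facts ! k)). \<sigma>' v < n) \<and>
      inst (\<pi> \<circ> \<sigma>) (snd (facts ! k)) = inst \<sigma>' (snd (facts ! k))"
    by (intro exI[of _ "\<pi> \<circ> \<sigma>"]) simp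
  then have "(k, inst (\<pi> \<circ> \<sigma>) (snd (facts ! k))) \<in> choices facts n"
    unfolding choices_def using c(2) by simp
  moreover have "RC \<pi> c = (k, inst (\<pi> \<circ> \<sigma>) (snd (facts ! k)))" using c by (simp add: RC_def ren_inst)
  ultimately show ?thesis by simp
qed

lemma exch_ok:
  assumes fS: "finite S" and wf: "problog_wf S ar facts bk"
    and \<omega>: "\<omega> \<in> worlds S ar n" and \<pi>: "bij_betw \<pi> {..<n} {..<n}"
  shows "problog_dist facts bk n \<omega> = problog_dist facts bk n (rename_world \<pi> \<omega>)"
proof -
  let ?C = "choices facts n"
  let ?q = "\<lambda>c. fst (facts ! fst c)"
  define \<pi>' where "\<pi>' = inv_into {..<n} \<pi>"
  have p1: "\<forall>x<n. \<pi> x < n" using bij_betwE[OF \<pi>] by simp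
  have p2: "\<forall>x<n. \<pi>' x < n" unfolding \<pi>'_def using bij_betwE[OF bij_betw_inv_into[OF \<pi>]] by simp
  have p3: "\<forall>x<n. \<pi>' (\<pi> x) = x" unfolding \<pi>'_def using bij_betw_inv_into_left[OF \<pi>] by simp
  have p4: "\<forall>x<n. \<pi> (\<pi>' x) = x" unfolding \<pi>'_def using bij_betw_inv_into_right[OF \<pi>] by simp
  have r3: "\<And>g. g \<in> argsin n \<Longrightarrow> ren \<pi>' (ren \<pi> g) = g" using p3 by (intro ren_ren) auto
  have r4: "\<And>g. g \<in> argsin n \<Longrightarrow> ren \<pi> (ren \<pi>' g) = g" using p4 by (intro ren_ren) auto
  have bij: "bij_betw (RC \<pi>) ?C ?C"
  proof (rule bij_betw_byWitness[where f'="RC \<pi>'"])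
    show "\<forall>c\<in>?C. RC \<pi>' (RC \<pi> c) = c"
    proof
      fix c assume "c \<in> ?C"
      then have "snd c \<in> argsin n" by (rule choices_argsin)
      then show "RC \<pi>' (RC \<pi> c) = c" by (simp add: RC_def r3)
    qed
    show "\<forall>c\<in>?C. RC \<pi> (RC \<pi>' c) = c"
    proof
      fix c assume "c \<in> ?C"
      then have "snd c \<in> argsin n" by (rule choices_argsin)
      then show "RC \<pi> (RC \<pi>' c) = c" by (simp add: RC_def r4)
    qed
    show "RC \<pi> ` ?C \<subseteq> ?C" using RC_choices[OF p1] by blast
    show "RC \<pi>' ` ?C \<subseteq> ?C" using RC_choices[OF p2] by blast
  qed
  have injC: "inj_on (RC \<pi>) ?C" using bij bij_betw_def by blast
  have injA: "inj_on (ren \<pi>) (argsin n)"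
    by (rule inj_on_inverseI[where g="ren \<pi>'"]) (use r3 in blast)
  have wA: "\<omega> \<subseteq> argsin n" using \<omega> GA_argsin unfolding worlds_def by blast
  have lmren: "least_model bk n (ren \<pi> ` G) = ren \<pi> ` least_model bk n G" if G: "G \<subseteq> argsin n" for G
  proof
    show "ren \<pi> ` least_model bk n G \<subseteq> least_model bk n (ren \<pi> ` G)"
      using lm_rename[OF _ p1] by blast
    show "least_model bk n (ren \<pi> ` G) \<subseteq> ren \<pi> ` least_model bk n G"
    proof
      fix g assume g: "g \<in> least_model bk n (ren \<pi> ` G)"
      have GA': "ren \<pi> ` G \<subseteq> argsin n" using G ren_argsin[OF _ p1] by blast
      have ga: "g \<in> argsin n" using lm_argsin[OF g GA'] .
      have "ren \<pi>' g \<in> least_model bk n (ren \<pi>' ` ren \<pi> ` G)" using lm_rename[OF g p2] .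
      moreover have "ren \<pi>' ` ren \<pi> ` G = G"
      proof -
        have "ren \<pi>' ` ren \<pi> ` G = (\<lambda>g. g) ` G" unfolding image_image
          by (rule image_cong) (use G r3 in blast)+
        then show ?thesis by simp
      qed
      ultimately have "ren \<pi>' g \<in> least_model bk n G" by simp
      moreover have "g = ren \<pi> (ren \<pi>' g)" using r4[OF ga] by simp
      ultimately show "g \<in> ren \<pi> ` least_model bk n G" by blast
    qed
  qed
  have rw: "rename_world \<pi> \<omega> = ren \<pi> ` \<omega>" unfolding rename_world_def ren_def ..
  have "problog_dist facts bk n (rename_world \<pi> \<omega>)
      = (\<Sum>F\<in>Pow ?C. if least_model bk n (snd ` F) = ren \<pi> ` \<omega> then wt ?q ?C F else 0)"
    unfolding problog_dist_def rw sel_prob_wt ..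
  also have "\<dots> = (\<Sum>F\<in>Pow ?C. if least_model bk n (snd ` (RC \<pi> ` F)) = ren \<pi> ` \<omega> then wt ?q ?C (RC \<pi> ` F) else 0)"
    by (rule sum.reindex_bij_betw[OF bij_betw_Pow[OF bij], symmetric])
  also have "\<dots> = (\<Sum>F\<in>Pow ?C. if least_model bk n (snd ` F) = \<omega> then wt ?q ?C F else 0)"
  proof (rule sum.cong)
    fix F assume F: "F \<in> Pow ?C"
    have sF: "snd ` F \<subseteq> argsin n" using F choices_argsin by blast
    have "snd ` (RC \<pi> ` F) = ren \<pi> ` snd ` F" by (simp add: RC_def image_image)
    then have "least_model bk n (snd ` (RC \<pi> ` F)) = ren \<pi> ` least_model bk n (snd ` F)"
      using lmren[OF sF] by simp
    moreover have "least_model bk n (snd ` F) \<subseteq> argsin n" using lm_argsin sF by blast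
    ultimately have e1: "(least_model bk n (snd ` (RC \<pi> ` F)) = ren \<pi> ` \<omega>) = (least_model bk n (snd ` F) = \<omega>)"
      using inj_on_image_eq_iff[OF injA _ wA] by simp
    have "wt ?q ?C (RC \<pi> ` F) = (\<Prod>c\<in>?C. if RC \<pi> c \<in> RC \<pi> ` F then ?q (RC \<pi> c) else 1 - ?q (RC \<pi> c))"
      unfolding wt_def by (rule prod.reindex_bij_betw[OF bij, symmetric])
    also have "\<dots> = wt ?q ?C F"
      unfolding wt_def
    proof (rule prod.cong)
      fix c assume c: "c \<in> ?C"
      have "(RC \<pi> c \<in> RC \<pi> ` F) = (c \<in> F)" using inj_on_image_mem_iff[OF injC c] F by blast
      then show "(if RC \<pi> c \<in> RC \<pi> ` F then ?q (RC \<pi> c) else 1 - ?q (RC \<pi> c)) = (if c \<in> F then ?q c else 1 - ?q c)"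
        by (simp add: RC_def)
    qed simp
    finally show "(if least_model bk n (snd ` (RC \<pi> ` F)) = ren \<pi> ` \<omega> then wt ?q ?C (RC \<pi> ` F) else 0)
        = (if least_model bk n (snd ` F) = \<omega> then wt ?q ?C F else 0)" using e1 by simp
  qed simp
  also have "\<dots> = problog_dist facts bk n \<omega>"
    unfolding problog_dist_def sel_prob_wt ..
  finally show ?thesis by simp
qed

theorem mainTheorem3:
  fixes S :: "'r set" and ar :: "'r \<Rightarrow> nat"
    and facts :: "(real \<times> ('r,'v) atom) list"
    and bk :: "(('r,'v) atom \<times> ('r,'v) atom list) list"
  assumes "finite S"
    and "problog_wf S ar facts bk"
    and "body_vars_in_head bk"
  shows "projective_rrsm S ar (problog_dist facts bk)"
  unfolding projective_rrsm_def exchangeable_def isomorphic_worlds_def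
  using dist_ok[OF assms(1,2)] exch_ok[OF assms(1,2)] marg_ok[OF assms] by blast

end
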